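(* Let $\langle A,C,d,O,v,(\prec_a)_{a\in A}\rangle$ be an infinite sequential game, let $\Gamma\subseteq\mathcal{P}(C^\omega)$, and assume: (1) every $\prec_a$ is a strict weak order; (2) the win-lose game $\langle C,D,W\rangle$ is determined for all $W\in\Gamma$ and $D\subseteq C^*$; (3) for every $a\in A$, every $\prec_a$-terminal interval $I$ and every $\gamma\in C^*$, $v^{-1}[I]\cap\gamma C^\omega\in\Gamma$; (4) for every $a\in A$, play $p\in C^\omega$ and increasing $\varphi:\mathbb{N}\to\mathbb{N}$, if $d(p_{<\varphi(n)})=a$ and $G_a(p_{<\varphi(n+1)})\subsetneq G_a(p_{<\varphi(n)})$ for all $n\in\mathbb{N}$, then $v(p)\in\bigcap_{n\in\mathbb{N}}G_a(p_{<\varphi(n)})$; (5) for every $a\in A$ and every $\gamma\in C^*$ there exists a strategy $s$ of $a$ with $g_a(\gamma,s)=G_a(\gamma)$. Then the game has a Nash equilibrium.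
   Context: The game consists of non-empty sets $A$ (agents), $C$ (choices), $O$ (outcomes), $d:C^*\to A$ (chooser after each history), $v:C^\omega\to O$, and preferences $\prec_a$ on $O$. A strategy of $a$ is a function $s:d^{-1}(\{a\})\to C$; a profile is identified with $\sigma:C^*\to C$, inducing the play $p(\sigma)$ with $p_n=\sigma(p_{<n})$ ($p_{<n}$ the length-$n$ prefix). $\sigma$ is a Nash equilibrium if there is no agent $a$ and strategy $s$ of $a$ with $v(p(\sigma))\prec_a v(p(\sigma_{a\mapsto s}))$, where $\sigma_{a\mapsto s}$ agrees with $s$ on $d^{-1}(\{a\})$ and with $\sigma$ elsewhere. For partial $t:\subseteq C^*\to C$, $P(t)$ is the set of plays of total profiles extending $t$. For a strategy $s$ of $a$ and $\gamma\in C^*$, $s|_\gamma$ is its restriction to histories extending $\gamma$; $g_a(\gamma,s):=\{o\in O\mid\exists p\in P(s|_\gamma)\cap\gamma C^\omega,\ \neg(o\prec_a v(p))\}$ and $G_a(\gamma):=\bigcap_s g_a(\gamma,s)$ over all strategies $s$ of $a$. A strict weak order is an irreflexive, transitive relation with $\neg(x\prec y)\wedge\neg(y\prec z)\Rightarrow\neg(x\prec z)$. A $\prec_a$-terminal interval is a set $I\subseteq O$ such that $o\in I$ and $\neg(o'\prec_a o)$ imply $o'\in I$. The win-lose game $\langle C,D,W\rangle$ is the two-player game where the first player chooses after histories in $D$, the second after histories in $C^*\setminus D$, and the first player wins iff the play lies in $W$; it is determined if one player has a winning strategy. *)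

theory Defs
  imports Main
begin

(* Histories C^* are lists, plays C^omega are functions nat => 'c.
   d :: 'c list => 'a (chooser), v :: (nat => 'c) => 'o (outcome),
   pref a x y  means  x \<prec>_a y. *)

definition pfx :: "(nat \<Rightarrow> 'c) \<Rightarrow> nat \<Rightarrow> 'c list" where
  "pfx p n = map p [0..<n]"

fun hist :: "('c list \<Rightarrow> 'c) \<Rightarrow> nat \<Rightarrow> 'c list" where
  "hist \<sigma> 0 = []"
| "hist \<sigma> (Suc n) = hist \<sigma> n @ [\<sigma> (hist \<sigma> n)]"

definition play :: "('c list \<Rightarrow> 'c) \<Rightarrow> nat \<Rightarrow> 'c" where
  "play \<sigma> n = \<sigma> (hist \<sigma> n)"

definition cyl :: "'c list \<Rightarrow> (nat \<Rightarrow> 'c) set" where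
  "cyl \<gamma> = {p. pfx p (length \<gamma>) = \<gamma>}"

(* \<sigma>_{a\<mapsto>s}: a strategy of a is represented by a total function whose values
   on d^{-1}{a} matter only *)
definition deviate :: "('c list \<Rightarrow> 'a) \<Rightarrow> ('c list \<Rightarrow> 'c) \<Rightarrow> 'a \<Rightarrow> ('c list \<Rightarrow> 'c) \<Rightarrow> 'c list \<Rightarrow> 'c" where
  "deviate d \<sigma> a s = (\<lambda>h. if d h = a then s h else \<sigma> h)"

definition nash_eq :: "('c list \<Rightarrow> 'a) \<Rightarrow> ((nat \<Rightarrow> 'c) \<Rightarrow> 'o) \<Rightarrow> ('a \<Rightarrow> 'o \<Rightarrow> 'o \<Rightarrow> bool)
    \<Rightarrow> ('c list \<Rightarrow> 'c) \<Rightarrow> bool" where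
  "nash_eq d v pref \<sigma> \<longleftrightarrow>
     \<not> (\<exists>a s. pref a (v (play \<sigma>)) (v (play (deviate d \<sigma> a s))))"

(* P(s|_\<gamma>): plays of total profiles extending the restriction of the strategy s
   of a to the histories of a extending \<gamma> *)
definition plays_restr :: "('c list \<Rightarrow> 'a) \<Rightarrow> 'a \<Rightarrow> 'c list \<Rightarrow> ('c list \<Rightarrow> 'c) \<Rightarrow> (nat \<Rightarrow> 'c) set" where
  "plays_restr d a \<gamma> s =
     {play \<sigma> | \<sigma>. \<forall>h. d h = a \<and> (\<exists>t. h = \<gamma> @ t) \<longrightarrow> \<sigma> h = s h}"

definition g_set :: "('c list \<Rightarrow> 'a) \<Rightarrow> ((nat \<Rightarrow> 'c) \<Rightarrow> 'o) \<Rightarrow> ('a \<Rightarrow> 'o \<Rightarrow> 'o \<Rightarrow> bool)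
    \<Rightarrow> 'a \<Rightarrow> 'c list \<Rightarrow> ('c list \<Rightarrow> 'c) \<Rightarrow> 'o set" where
  "g_set d v pref a \<gamma> s =
     {x. \<exists>p \<in> plays_restr d a \<gamma> s \<inter> cyl \<gamma>. \<not> pref a x (v p)}"

definition G_set :: "('c list \<Rightarrow> 'a) \<Rightarrow> ((nat \<Rightarrow> 'c) \<Rightarrow> 'o) \<Rightarrow> ('a \<Rightarrow> 'o \<Rightarrow> 'o \<Rightarrow> bool)
    \<Rightarrow> 'a \<Rightarrow> 'c list \<Rightarrow> 'o set" where
  "G_set d v pref a \<gamma> = (\<Inter>s. g_set d v pref a \<gamma> s)"

definition strict_weak_order :: "('o \<Rightarrow> 'o \<Rightarrow> bool) \<Rightarrow> bool" where
  "strict_weak_order r \<longleftrightarrow>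
     (\<forall>x. \<not> r x x) \<and> (\<forall>x y z. r x y \<and> r y z \<longrightarrow> r x z) \<and>
     (\<forall>x y z. \<not> r x y \<and> \<not> r y z \<longrightarrow> \<not> r x z)"

definition terminal_interval :: "('o \<Rightarrow> 'o \<Rightarrow> bool) \<Rightarrow> 'o set \<Rightarrow> bool" where
  "terminal_interval r I \<longleftrightarrow> (\<forall>x y. x \<in> I \<and> \<not> r y x \<longrightarrow> y \<in> I)"

(* win-lose game <C,D,W>: player 1 chooses at histories in D, player 2 elsewhere *)
definition determined :: "'c list set \<Rightarrow> (nat \<Rightarrow> 'c) set \<Rightarrow> bool" where
  "determined D W \<longleftrightarrow>
     (\<exists>s1. \<forall>s2. play (\<lambda>h. if h \<in> D then s1 h else s2 h) \<in> W) \<or>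
     (\<exists>s2. \<forall>s1. play (\<lambda>h. if h \<in> D then s1 h else s2 h) \<notin> W)"

end

theory Submission
  imports Defs
begin
lemma pfx_Suc: "pfx p (Suc n) = pfx p n @ [p n]" by (simp add: pfx_def)
lemma length_pfx[simp]: "length (pfx p n) = n" by (simp add: pfx_def)
lemma nth_pfx: "k < n \<Longrightarrow> pfx p n ! k = p k" by (simp add: pfx_def)
lemma take_pfx: "k \<le> n \<Longrightarrow> take k (pfx p n) = pfx p k"
  by (simp add: pfx_def take_map min_def)
lemma pfx_eq_iff: "pfx p n = pfx q n \<longleftrightarrow> (\<forall>k<n. p k = q k)"
  by (auto simp: pfx_def)

lemma hist_pfx: "hist \<sigma> n = pfx (play \<sigma>) n"
  by (induction n) (simp_all add: pfx_Suc play_def, simp add: pfx_def)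

lemma play_eq_iff: "play \<sigma> = p \<longleftrightarrow> (\<forall>n. \<sigma> (pfx p n) = p n)"
proof
  assume "play \<sigma> = p" then show "\<forall>n. \<sigma> (pfx p n) = p n"
    by (metis hist_pfx play_def)
next
  assume h: "\<forall>n. \<sigma> (pfx p n) = p n"
  have "hist \<sigma> n = pfx p n" for n
    by (induction n) (simp_all add: pfx_Suc h, simp add: pfx_def)
  then show "play \<sigma> = p" using h by (auto simp: play_def)
qed

lemma ext_pfx: "p \<in> cyl \<gamma> \<Longrightarrow> (\<exists>t. pfx p n = \<gamma> @ t) \<longleftrightarrow> length \<gamma> \<le> n"
proof
  assume "\<exists>t. pfx p n = \<gamma> @ t" then show "length \<gamma> \<le> n"
    by (metis le_add1 length_append length_pfx)
next
  assume c: "p \<in> cyl \<gamma>" and l: "length \<gamma> \<le> n"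
  have "pfx p n = take (length \<gamma>) (pfx p n) @ drop (length \<gamma>) (pfx p n)" by simp
  also have "take (length \<gamma>) (pfx p n) = \<gamma>" using c l by (simp add: take_pfx cyl_def)
  finally show "\<exists>t. pfx p n = \<gamma> @ t" by blast
qed

lemma plays_restr_iff: "p \<in> plays_restr d a \<gamma> s \<longleftrightarrow>
   (\<forall>n. d (pfx p n) = a \<and> (\<exists>t. pfx p n = \<gamma> @ t) \<longrightarrow> s (pfx p n) = p n)"
proof
  assume "p \<in> plays_restr d a \<gamma> s"
  then obtain \<sigma> where pe: "p = play \<sigma>" and H: "\<forall>h. d h = a \<and> (\<exists>t. h = \<gamma> @ t) \<longrightarrow> \<sigma> h = s h"
    by (auto simp: plays_restr_def)
  have E: "\<forall>n. \<sigma> (pfx p n) = p n" using pe play_eq_iff by blast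
  show "\<forall>n. d (pfx p n) = a \<and> (\<exists>t. pfx p n = \<gamma> @ t) \<longrightarrow> s (pfx p n) = p n"
  proof (intro allI impI)
    fix n assume c: "d (pfx p n) = a \<and> (\<exists>t. pfx p n = \<gamma> @ t)"
    have "\<sigma> (pfx p n) = s (pfx p n)" using H c by blast
    then show "s (pfx p n) = p n" using E by simp
  qed
next
  assume h: "\<forall>n. d (pfx p n) = a \<and> (\<exists>t. pfx p n = \<gamma> @ t) \<longrightarrow> s (pfx p n) = p n"
  define \<sigma> where "\<sigma> = (\<lambda>x. if x = pfx p (length x) then p (length x) else s x)"
  have "play \<sigma> = p" unfolding play_eq_iff \<sigma>_def by simp
  moreover have "\<forall>x. d x = a \<and> (\<exists>t. x = \<gamma> @ t) \<longrightarrow> \<sigma> x = s x"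
  proof (intro allI impI)
    fix x assume c: "d x = a \<and> (\<exists>t. x = \<gamma> @ t)"
    show "\<sigma> x = s x"
    proof (cases "x = pfx p (length x)")
      case True
      then have "s x = p (length x)" using h[rule_format, of "length x"] c by simp
      then show ?thesis using True unfolding \<sigma>_def by simp
    qed (simp add: \<sigma>_def)
  qed
  ultimately show "p \<in> plays_restr d a \<gamma> s" unfolding plays_restr_def by blast
qed

lemma cons_iff: "p \<in> cyl \<gamma> \<Longrightarrow> p \<in> plays_restr d a \<gamma> s \<longleftrightarrow>
   (\<forall>n \<ge> length \<gamma>. d (pfx p n) = a \<longrightarrow> s (pfx p n) = p n)"
  by (auto simp: plays_restr_iff ext_pfx)

lemma g_alt: "g_set d v pref a \<gamma> s = {x. \<exists>p \<in> cyl \<gamma>.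
   (\<forall>n \<ge> length \<gamma>. d (pfx p n) = a \<longrightarrow> s (pfx p n) = p n) \<and> \<not> pref a x (v p)}"
  unfolding g_set_def by (auto simp: cons_iff; blast)

lemma cyl_Suc: "p \<in> cyl (h @ [c]) \<longleftrightarrow> p \<in> cyl h \<and> p (length h) = c"
  by (auto simp: cyl_def pfx_Suc)

lemma pfx_cyl: "p \<in> cyl (pfx p n)" by (simp add: cyl_def)


lemma antimono_upto:
  fixes f :: "nat \<Rightarrow> 'x set"
  assumes "\<forall>i<n. f (Suc i) \<subseteq> f i" "i \<le> j" "j \<le> n"
  shows "f j \<subseteq> f i"
  using assms(2,3)
proof (induction j)
  case 0 then show ?case by simp
next
  case (Suc j)
  show ?case
  proof (cases "i = Suc j")
    case False
    then have "i \<le> j" using Suc.prems by simp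
    then have "f j \<subseteq> f i" using Suc by simp
    moreover have "f (Suc j) \<subseteq> f j" using assms(1) Suc.prems by simp
    ultimately show ?thesis by blast
  qed simp
qed

locale game =
  fixes d :: "'c list \<Rightarrow> 'a" and v :: "(nat \<Rightarrow> 'c) \<Rightarrow> 'o"
    and pref :: "'a \<Rightarrow> 'o \<Rightarrow> 'o \<Rightarrow> bool"
    and \<Gamma> :: "(nat \<Rightarrow> 'c) set set"
  assumes swo: "\<forall>a. strict_weak_order (pref a)"
    and det: "\<forall>W \<in> \<Gamma>. \<forall>D. determined D W"
    and term_int: "\<forall>a I \<gamma>. terminal_interval (pref a) I \<longrightarrow> v -` I \<inter> cyl \<gamma> \<in> \<Gamma>"
    and limit: "\<forall>a p \<phi>. strict_mono (\<phi> :: nat \<Rightarrow> nat) \<longrightarrow>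
        (\<forall>n. d (pfx p (\<phi> n)) = a \<and>
             G_set d v pref a (pfx p (\<phi> (Suc n))) \<subset> G_set d v pref a (pfx p (\<phi> n))) \<longrightarrow>
        v p \<in> (\<Inter>n. G_set d v pref a (pfx p (\<phi> n)))"
    and opt: "\<forall>a \<gamma>. \<exists>s. g_set d v pref a \<gamma> s = G_set d v pref a \<gamma>"
begin

abbreviation "g \<equiv> g_set d v pref"
abbreviation "G \<equiv> G_set d v pref"

lemma irr: "\<not> pref a x x" using swo unfolding strict_weak_order_def by blast
lemma wo: "\<not> pref a x y \<Longrightarrow> \<not> pref a y z \<Longrightarrow> \<not> pref a x z"
  using swo unfolding strict_weak_order_def by blast

lemma G_sub_g: "G a h \<subseteq> g a h s" unfolding G_set_def by blast

lemma g_mono_step: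
  assumes "d h \<noteq> a \<or> s h = c"
  shows "g a (h @ [c]) s \<subseteq> g a h s"
proof
  fix x assume "x \<in> g a (h @ [c]) s"
  then obtain p where p: "p \<in> cyl (h @ [c])"
    and C: "\<forall>n\<ge>length (h @ [c]). d (pfx p n) = a \<longrightarrow> s (pfx p n) = p n"
    and x: "\<not> pref a x (v p)" by (auto simp: g_alt)
  have ph: "p \<in> cyl h" "p (length h) = c" using p by (simp_all add: cyl_Suc)
  have hh: "pfx p (length h) = h" using ph(1) cyl_def by auto
  have "\<forall>n\<ge>length h. d (pfx p n) = a \<longrightarrow> s (pfx p n) = p n"
  proof (intro allI impI)
    fix n assume n: "length h \<le> n" and dn: "d (pfx p n) = a"
    show "s (pfx p n) = p n"
    proof (cases "n = length h")
      case True thus ?thesis using assms dn hh ph(2) by auto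
    next
      case False thus ?thesis using C n dn by auto
    qed
  qed
  thus "x \<in> g a h s" using ph(1) x by (auto simp: g_alt)
qed

lemma G_mono_other: "d h \<noteq> a \<Longrightarrow> G a (h @ [c]) \<subseteq> G a h"
  using g_mono_step[of h a] unfolding G_set_def by blast

lemma g_child: "d h = a \<Longrightarrow> g a h (s(h := c)) \<subseteq> g a (h @ [c]) s"
proof
  fix x assume da: "d h = a" and "x \<in> g a h (s(h := c))"
  then obtain p where p: "p \<in> cyl h"
    and C: "\<forall>n\<ge>length h. d (pfx p n) = a \<longrightarrow> (s(h := c)) (pfx p n) = p n"
    and x: "\<not> pref a x (v p)" by (auto simp: g_alt)
  have hh: "pfx p (length h) = h" using p cyl_def by auto
  have "p (length h) = c" using C[rule_format, of "length h"] hh da by simp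
  then have p': "p \<in> cyl (h @ [c])" using p by (simp add: cyl_Suc)
  have "\<forall>n\<ge>length (h @ [c]). d (pfx p n) = a \<longrightarrow> s (pfx p n) = p n"
  proof (intro allI impI)
    fix n assume n: "length (h @ [c]) \<le> n" and dn: "d (pfx p n) = a"
    have "pfx p n \<noteq> h" using n by (metis Suc_n_not_le_n length_append_singleton length_pfx)
    then show "s (pfx p n) = p n" using C[rule_format, of n] n dn by simp
  qed
  thus "x \<in> g a (h @ [c]) s" using p' x by (auto simp: g_alt)
qed

lemma G_le_child: "d h = a \<Longrightarrow> G a h \<subseteq> G a (h @ [c])"
proof -
  assume da: "d h = a"
  have "G a h \<subseteq> g a (h @ [c]) s" for s
    using G_sub_g[of a h "s(h := c)"] g_child[OF da, of s c] by blast
  then show ?thesis unfolding G_set_def by blast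
qed

lemma g_terminal: "x \<in> g a h s \<Longrightarrow> \<not> pref a y x \<Longrightarrow> y \<in> g a h s"
proof -
  assume x: "x \<in> g a h s" and y: "\<not> pref a y x"
  then obtain p where "p \<in> plays_restr d a h s \<inter> cyl h" "\<not> pref a x (v p)"
    unfolding g_set_def by blast
  moreover have "\<not> pref a y (v p)" using wo[OF y calculation(2)] .
  ultimately show ?thesis unfolding g_set_def by blast
qed

lemma G_terminal: "x \<in> G a h \<Longrightarrow> \<not> pref a y x \<Longrightarrow> y \<in> G a h"
proof -
  assume "x \<in> G a h" "\<not> pref a y x"
  then have "y \<in> g a h s" for s using g_terminal[of x a h s y] G_sub_g[of a h s] by blast
  then show ?thesis unfolding G_set_def by blast
qed

lemma in_g: "p \<in> cyl \<gamma> \<Longrightarrow> (\<forall>n\<ge>length \<gamma>. d (pfx p n) = a \<longrightarrow> s (pfx p n) = p n)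
   \<Longrightarrow> v p \<in> g a \<gamma> s"
  using irr by (auto simp: g_alt)

lemma g_chain:
  assumes A: "\<forall>j. m \<le> j \<and> j < n \<and> d (pfx p j) = a \<longrightarrow> s (pfx p j) = p j" and mn: "m \<le> n"
  shows "g a (pfx p n) s \<subseteq> g a (pfx p m) s"
proof -
  have "\<forall>k. m + k \<le> n \<longrightarrow> g a (pfx p (m + k)) s \<subseteq> g a (pfx p m) s"
  proof
    fix k show "m + k \<le> n \<longrightarrow> g a (pfx p (m + k)) s \<subseteq> g a (pfx p m) s"
    proof (induction k)
      case 0 then show ?case by simp
    next
      case (Suc k)
      show ?case
      proof
        assume le: "m + Suc k \<le> n"
        have "d (pfx p (m + k)) \<noteq> a \<or> s (pfx p (m + k)) = p (m + k)"
          using A le by simp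
        then have "g a (pfx p (m + k) @ [p (m + k)]) s \<subseteq> g a (pfx p (m + k)) s"
          by (rule g_mono_step)
        then have "g a (pfx p (m + Suc k)) s \<subseteq> g a (pfx p (m + k)) s"
          by (simp add: pfx_Suc)
        moreover have "g a (pfx p (m + k)) s \<subseteq> g a (pfx p m) s" using Suc le by simp
        ultimately show "g a (pfx p (m + Suc k)) s \<subseteq> g a (pfx p m) s" by blast
      qed
    qed
  qed
  from this[rule_format, of "n - m"] mn show ?thesis by simp
qed

definition S where "S a \<gamma> = (SOME s. g a \<gamma> s = G a \<gamma>)"
lemma S_opt: "g a \<gamma> (S a \<gamma>) = G a \<gamma>"
proof -
  have "\<exists>s. g a \<gamma> s = G a \<gamma>" using opt[rule_format, of a \<gamma>] by assumption
  then have "g a \<gamma> (SOME s. g a \<gamma> s = G a \<gamma>) = G a \<gamma>" by (rule someI_ex)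
  then show ?thesis by (simp only: S_def)
qed

definition bs where "bs h = (LEAST k. k \<le> length h \<and> G (d h) (take k h) = G (d h) h)"
definition rule where "rule h = S (d h) (take (bs h) h) h"
definition path where "path = play rule"

lemma path_step: "rule (pfx path n) = path n"
  unfolding path_def using play_eq_iff by blast

lemma bs_path: "bs (pfx path n) =
   (LEAST k. k \<le> n \<and> G (d (pfx path n)) (pfx path k) = G (d (pfx path n)) (pfx path n))"
  unfolding bs_def by (simp add: take_pfx cong: conj_cong)

lemma bs_props:
  shows "bs (pfx path n) \<le> n"
    and "G (d (pfx path n)) (pfx path (bs (pfx path n))) = G (d (pfx path n)) (pfx path n)"
proof -
  let ?P = "\<lambda>k. k \<le> n \<and> G (d (pfx path n)) (pfx path k) = G (d (pfx path n)) (pfx path n)"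
  have "?P (Least ?P)" by (rule LeastI[of ?P n]) simp
  then show "bs (pfx path n) \<le> n"
    and "G (d (pfx path n)) (pfx path (bs (pfx path n))) = G (d (pfx path n)) (pfx path n)"
    unfolding bs_path by auto
qed

lemma bs_eq:
  assumes "d (pfx path k) = a" "d (pfx path n) = a"
    "G a (pfx path k) = G a (pfx path n)" "bs (pfx path n) \<le> k"
  shows "bs (pfx path k) = bs (pfx path n)"
proof -
  let ?m = "bs (pfx path n)"
  have m: "?m \<le> n" "G a (pfx path ?m) = G a (pfx path n)" using bs_props[of n] assms(2) by auto
  have "(LEAST y. y \<le> k \<and> G a (pfx path y) = G a (pfx path k)) = ?m"
  proof (rule Least_equality)
    show "?m \<le> k \<and> G a (pfx path ?m) = G a (pfx path k)" using m assms by simp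
  next
    fix y assume y: "y \<le> k \<and> G a (pfx path y) = G a (pfx path k)"
    show "?m \<le> y"
    proof (cases "y \<le> n")
      case True
      then show ?thesis unfolding bs_path using assms(2,3) y by (auto intro: Least_le)
    next
      case False then show ?thesis using m by simp
    qed
  qed
  then show ?thesis using bs_path[of k] assms(1) by simp
qed

lemma rule_path_a:
  assumes "d (pfx path j) = a"
  shows "path j = S a (pfx path (bs (pfx path j))) (pfx path j)"
  using path_step[of j] assms bs_props(1)[of j]
  by (simp add: rule_def take_pfx)

end

context game begin

lemma mono_step:
  assumes IH: "\<forall>i<n. G a (pfx path (Suc i)) \<subseteq> G a (pfx path i)"
  shows "G a (pfx path (Suc n)) \<subseteq> G a (pfx path n)"
proof (cases "d (pfx path n) = a")
  case False
  then show ?thesis using G_mono_other[of "pfx path n" a "path n"] by (simp add: pfx_Suc)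
next
  case True
  define m where "m = bs (pfx path n)"
  define s where "s = S a (pfx path m)"
  have m: "m \<le> n" "G a (pfx path m) = G a (pfx path n)"
    using bs_props[of n] True unfolding m_def by auto
  have cons: "s (pfx path j) = path j" if j: "m \<le> j" "j < Suc n" "d (pfx path j) = a" for j
  proof -
    have "G a (pfx path n) \<subseteq> G a (pfx path j)"
      using antimono_upto[OF IH, of j n] j by simp
    moreover have "G a (pfx path j) \<subseteq> G a (pfx path m)"
      using antimono_upto[OF IH, of m j] j by simp
    ultimately have e: "G a (pfx path j) = G a (pfx path n)" using m by blast
    have "bs (pfx path j) = m" unfolding m_def
      by (rule bs_eq[OF j(3) True e]) (use j m_def in simp)
    then show ?thesis using rule_path_a[OF j(3)] unfolding s_def by simp
  qed
  have "g a (pfx path (Suc n)) s \<subseteq> g a (pfx path m) s"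
    by (rule g_chain) (use cons m in auto)
  then show ?thesis using G_sub_g[of a "pfx path (Suc n)" s] S_opt[of a "pfx path m"] m(2)
    unfolding s_def by blast
qed

lemma mono_all: "G a (pfx path (Suc i)) \<subseteq> G a (pfx path i)"
proof -
  have "\<forall>i<n. G a (pfx path (Suc i)) \<subseteq> G a (pfx path i)" for n
  proof (induction n)
    case 0 then show ?case by simp
  next
    case (Suc n)
    then show ?case using mono_step[OF Suc] less_Suc_eq by auto
  qed
  then show ?thesis by blast
qed

lemma antimono: "i \<le> j \<Longrightarrow> G a (pfx path j) \<subseteq> G a (pfx path i)"
  using antimono_upto[of j "\<lambda>k. G a (pfx path k)" i] mono_all by blast

lemma caseA:
  assumes an: "d (pfx path n) = a"
    and st: "\<forall>k\<ge>n. d (pfx path k) = a \<longrightarrow> G a (pfx path k) = G a (pfx path n)"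
  shows "v path \<in> G a (pfx path n)"
proof -
  define m where "m = bs (pfx path n)"
  define s where "s = S a (pfx path m)"
  have m: "m \<le> n" "G a (pfx path m) = G a (pfx path n)"
    using bs_props[of n] an unfolding m_def by auto
  have cons: "\<forall>k\<ge>length (pfx path m). d (pfx path k) = a \<longrightarrow> s (pfx path k) = path k"
  proof (intro allI impI)
    fix k assume k: "length (pfx path m) \<le> k" and dk: "d (pfx path k) = a"
    have e: "G a (pfx path k) = G a (pfx path n)"
    proof (cases "k \<le> n")
      case True
      have "G a (pfx path n) \<subseteq> G a (pfx path k)" using antimono True by blast
      moreover have "G a (pfx path k) \<subseteq> G a (pfx path m)" using antimono k by simp
      ultimately show ?thesis using m by blast
    next
      case False then show ?thesis using st dk by simp
    qed
    have "bs (pfx path k) = m" unfolding m_def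
      by (rule bs_eq[OF dk an e]) (use k m_def in simp)
    then show "s (pfx path k) = path k" using rule_path_a[OF dk] unfolding s_def by simp
  qed
  have "v path \<in> g a (pfx path m) s" by (rule in_g[OF pfx_cyl cons])
  then show ?thesis using S_opt[of a "pfx path m"] m(2) unfolding s_def by simp
qed

lemma key:
  assumes an: "d (pfx path n0) = a"
  shows "v path \<in> G a (pfx path n0)"
proof (rule ccontr)
  assume nin: "v path \<notin> G a (pfx path n0)"
  let ?Q = "\<lambda>i k. i < k \<and> d (pfx path k) = a \<and> G a (pfx path k) \<subset> G a (pfx path i)"
  have step: "\<exists>k. ?Q i k" if i1: "d (pfx path i) = a" and i2: "v path \<notin> G a (pfx path i)" for i
  proof -
    have "\<not> (\<forall>k\<ge>i. d (pfx path k) = a \<longrightarrow> G a (pfx path k) = G a (pfx path i))"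
    proof
      assume "\<forall>k\<ge>i. d (pfx path k) = a \<longrightarrow> G a (pfx path k) = G a (pfx path i)"
      then have "v path \<in> G a (pfx path i)" by (rule caseA[OF i1])
      with i2 show False by simp
    qed
    then obtain k where k: "k \<ge> i" "d (pfx path k) = a" "G a (pfx path k) \<noteq> G a (pfx path i)"
      by auto
    have "G a (pfx path k) \<subseteq> G a (pfx path i)" using antimono[OF k(1)] .
    moreover have "k \<noteq> i" using k(3) by auto
    ultimately have "?Q i k" using k by auto
    then show ?thesis by (rule exI)
  qed
  define \<phi> where "\<phi> = rec_nat n0 (\<lambda>_ i. SOME k. ?Q i k)"
  have phi0: "\<phi> 0 = n0" unfolding \<phi>_def by simp
  have phiS: "\<phi> (Suc j) = (SOME k. ?Q (\<phi> j) k)" for j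
    unfolding \<phi>_def by simp
  have inv: "d (pfx path (\<phi> j)) = a \<and> v path \<notin> G a (pfx path (\<phi> j))" for j
  proof (induction j)
    case 0 then show ?case using an nin phi0 by simp
  next
    case (Suc j)
    have "\<exists>k. ?Q (\<phi> j) k" using step[OF conjunct1[OF Suc.IH] conjunct2[OF Suc.IH]] .
    then have q: "?Q (\<phi> j) (SOME k. ?Q (\<phi> j) k)" by (rule someI_ex)
    then have q': "?Q (\<phi> j) (\<phi> (Suc j))" by (simp only: phiS)
    have "G a (pfx path (\<phi> (Suc j))) \<subseteq> G a (pfx path (\<phi> j))" using q' by auto
    then have "v path \<notin> G a (pfx path (\<phi> (Suc j)))" using Suc.IH by auto
    then show ?case using q' by auto
  qed
  have Qj: "?Q (\<phi> j) (\<phi> (Suc j))" for j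
  proof -
    have "\<exists>k. ?Q (\<phi> j) k" using step[OF conjunct1[OF inv] conjunct2[OF inv]] .
    then have q: "?Q (\<phi> j) (SOME k. ?Q (\<phi> j) k)" by (rule someI_ex)
    then show ?thesis by (simp only: phiS)
  qed
  have sm: "strict_mono \<phi>" unfolding strict_mono_Suc_iff using Qj by auto
  have all: "\<forall>n. d (pfx path (\<phi> n)) = a \<and>
       G a (pfx path (\<phi> (Suc n))) \<subset> G a (pfx path (\<phi> n))"
    using Qj inv by auto
  have "v path \<in> (\<Inter>n. G a (pfx path (\<phi> n)))"
    by (rule limit[rule_format, OF sm all[rule_format]])
  then have "v path \<in> G a (pfx path (\<phi> 0))" by blast
  then show False using nin phi0 by simp
qed

lemma key_child:
  assumes "d (pfx path n) = a"
  shows "v path \<in> G a (pfx path n @ [c])"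
  using key[OF assms] G_le_child[OF assms] by blast

end

lemma cyl_nth: "p \<in> cyl \<gamma> \<Longrightarrow> k < length \<gamma> \<Longrightarrow> p k = \<gamma> ! k"
  using nth_pfx[of k "length \<gamma>" p] unfolding cyl_def by simp

lemma cyl_pfx_take: "p \<in> cyl \<gamma> \<Longrightarrow> k \<le> length \<gamma> \<Longrightarrow> pfx p k = take k \<gamma>"
  using take_pfx[of k "length \<gamma>" p] unfolding cyl_def by simp

context game begin

definition DD where "DD n c = {x. d x = d (pfx path n) \<or> (\<exists>t. t \<noteq> [] \<and> x @ t = pfx path n @ [c])}"
definition UU where "UU n = {y. pref (d (pfx path n)) (v path) y}"
definition WW where "WW n c = v -` UU n \<inter> cyl (pfx path n @ [c])"

lemma UU_term: "terminal_interval (pref (d (pfx path n))) (UU n)"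
  unfolding terminal_interval_def UU_def
proof (intro allI impI)
  fix x y assume h: "x \<in> {y. pref (d (pfx path n)) (v path) y} \<and> \<not> pref (d (pfx path n)) y x"
  show "y \<in> {y. pref (d (pfx path n)) (v path) y}"
    using wo[of "d (pfx path n)" "v path" y x] h by auto
qed

lemma WW_in: "WW n c \<in> \<Gamma>"
  unfolding WW_def by (rule term_int[rule_format, OF UU_term])

lemma not_p1: "\<not> (\<exists>s1. \<forall>s2. play (\<lambda>h. if h \<in> DD n c then s1 h else s2 h) \<in> WW n c)"
proof
  assume "\<exists>s1. \<forall>s2. play (\<lambda>h. if h \<in> DD n c then s1 h else s2 h) \<in> WW n c"
  then obtain s1 where win: "\<And>s2. play (\<lambda>h. if h \<in> DD n c then s1 h else s2 h) \<in> WW n c"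
    by blast
  define a where "a = d (pfx path n)"
  define \<gamma> where "\<gamma> = pfx path n @ [c]"
  have sub: "g a \<gamma> s1 \<subseteq> UU n"
  proof
    fix x assume "x \<in> g a \<gamma> s1"
    then obtain p' where p': "p' \<in> cyl \<gamma>"
      and C: "\<forall>k\<ge>length \<gamma>. d (pfx p' k) = a \<longrightarrow> s1 (pfx p' k) = p' k"
      and x: "\<not> pref a x (v p')" by (auto simp: g_alt)
    define s2 where "s2 = (\<lambda>y. if y = pfx p' (length y) then p' (length y) else s1 y)"
    define pr where "pr = (\<lambda>h. if h \<in> DD n c then s1 h else s2 h)"
    define q where "q = play pr"
    have qW: "q \<in> WW n c" unfolding q_def pr_def by (rule win)
    have qc: "q \<in> cyl \<gamma>" using qW unfolding WW_def \<gamma>_def by blast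
    have qq: "pr (pfx q k) = q k" for k using play_eq_iff[of pr q] q_def by simp
    have "pr (pfx p' k) = p' k" for k
    proof (cases "k < length \<gamma>")
      case True
      have "pfx q k = pfx p' k" using cyl_pfx_take[OF qc] cyl_pfx_take[OF p'] True by simp
      moreover have "q k = p' k" using cyl_nth[OF qc True] cyl_nth[OF p' True] by simp
      ultimately show ?thesis using qq[of k] by simp
    next
      case False
      show ?thesis
      proof (cases "pfx p' k \<in> DD n c")
        case True
        have "\<not> (\<exists>t. t \<noteq> [] \<and> pfx p' k @ t = \<gamma>)"
        proof
          assume "\<exists>t. t \<noteq> [] \<and> pfx p' k @ t = \<gamma>"
          then obtain t where "t \<noteq> []" "pfx p' k @ t = \<gamma>" by blast
          then have "length (pfx p' k) < length \<gamma>" by auto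
          then show False using False by simp
        qed
        then have "d (pfx p' k) = a" using True unfolding DD_def a_def \<gamma>_def by blast
        then show ?thesis using C False True unfolding pr_def by simp
      next
        case False
        then show ?thesis unfolding pr_def s2_def by simp
      qed
    qed
    then have "q = p'" unfolding q_def using play_eq_iff[of pr p'] by simp
    then have "v p' \<in> UU n" using qW unfolding WW_def by blast
    then show "x \<in> UU n" using UU_term[of n] x unfolding terminal_interval_def a_def by simp
  qed
  have "v path \<in> G a \<gamma>" unfolding a_def \<gamma>_def by (rule key_child) simp
  then have "v path \<in> UU n" using sub G_sub_g[of a \<gamma> s1] by blast
  then show False using irr unfolding UU_def by blast
qed

definition Pun where
  "Pun n c = (SOME s2. \<forall>s1. play (\<lambda>h. if h \<in> DD n c then s1 h else s2 h) \<notin> WW n c)"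

lemma Pun_prop: "play (\<lambda>h. if h \<in> DD n c then s1 h else Pun n c h) \<notin> WW n c"
proof -
  have "determined (DD n c) (WW n c)" using det WW_in[of n c] by simp
  then have "\<exists>s2. \<forall>s1. play (\<lambda>h. if h \<in> DD n c then s1 h else s2 h) \<notin> WW n c"
    using not_p1 unfolding determined_def by blast
  then have "\<forall>s1. play (\<lambda>h. if h \<in> DD n c then s1 h else Pun n c h) \<notin> WW n c"
    unfolding Pun_def by (rule someI_ex)
  then show ?thesis by blast
qed

definition fd where "fd x = (LEAST k. x ! k \<noteq> path k)"
definition sigma where
  "sigma x = (if x = pfx path (length x) then path (length x) else Pun (fd x) (x ! fd x) x)"

lemma play_sigma: "play sigma = path"
  unfolding play_eq_iff sigma_def by simp

lemma nash: "nash_eq d v pref sigma"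
  unfolding nash_eq_def
proof
  assume "\<exists>a s. pref a (v (play sigma)) (v (play (deviate d sigma a s)))"
  then obtain a s where pr0: "pref a (v (play sigma)) (v (play (deviate d sigma a s)))"
    by blast
  define dev where "dev = deviate d sigma a s"
  define q where "q = play dev"
  have pr': "pref a (v path) (v q)" using pr0 play_sigma unfolding q_def dev_def by simp
  have qq: "dev (pfx q k) = q k" for k using play_eq_iff[of dev q] q_def by simp
  have "q \<noteq> path"
  proof
    assume "q = path" then show False using pr' irr[of a "v path"] by simp
  qed
  then have ex: "\<exists>k. q k \<noteq> path k" by auto
  define n where "n = (LEAST k. q k \<noteq> path k)"
  have qn: "q n \<noteq> path n" unfolding n_def by (rule LeastI_ex) (rule ex)
  have before: "\<forall>k<n. q k = path k"
  proof (intro allI impI)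
    fix k assume "k < n"
    then show "q k = path k" using not_less_Least[of k "\<lambda>k. q k \<noteq> path k"] unfolding n_def by simp
  qed
  have pn: "pfx q n = pfx path n" using before pfx_eq_iff[of q n path] by simp
  have an: "d (pfx path n) = a"
  proof (rule ccontr)
    assume "d (pfx path n) \<noteq> a"
    then have "q n = sigma (pfx path n)" using qq[of n] pn unfolding dev_def deviate_def by simp
    then show False using qn unfolding sigma_def by simp
  qed
  define c where "c = q n"
  have qSn: "pfx q (Suc n) = pfx path n @ [c]" using pn unfolding c_def by (simp add: pfx_Suc)
  have "(\<lambda>h. if h \<in> DD n c then dev h else Pun n c h) (pfx q k) = q k" for k
  proof (cases "pfx q k \<in> DD n c")
    case True then show ?thesis using qq by simp
  next
    case False
    have "d (pfx q k) \<noteq> d (pfx path n)" using False unfolding DD_def by simp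
    then have da: "d (pfx q k) \<noteq> a" using an by simp
    have kn: "n < k"
    proof (rule ccontr)
      assume "\<not> n < k"
      then have kle: "k \<le> n" by simp
      then have e1: "pfx q k @ drop k (pfx q (Suc n)) = pfx path n @ [c]"
        using take_pfx[of k "Suc n" q] append_take_drop_id[of k "pfx q (Suc n)"] qSn by simp
      have e2: "drop k (pfx q (Suc n)) \<noteq> []" using kle by simp
      have "pfx q k \<in> DD n c" unfolding DD_def mem_Collect_eq
        by (rule disjI2, rule exI[of _ "drop k (pfx q (Suc n))"]) (simp only: e1 e2, simp)
      then show False using False by simp
    qed
    have neq: "pfx q k \<noteq> pfx path (length (pfx q k))"
    proof
      assume "pfx q k = pfx path (length (pfx q k))"
      then have "pfx q k = pfx path k" by simp
      then have "q n = path n" using kn pfx_eq_iff[of q k path] by simp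
      with qn show False by simp
    qed
    have fdq: "fd (pfx q k) = n" unfolding fd_def
    proof (rule Least_equality)
      show "pfx q k ! n \<noteq> path n" using kn qn nth_pfx[of n k q] by simp
    next
      fix y assume y: "pfx q k ! y \<noteq> path y"
      show "n \<le> y"
      proof (rule ccontr)
        assume "\<not> n \<le> y"
        then have "y < n" by simp
        then have "pfx q k ! y = path y" using kn before nth_pfx[of y k q] by simp
        then show False using y by simp
      qed
    qed
    have "pfx q k ! n = c" using kn nth_pfx[of n k q] unfolding c_def by simp
    then have "q k = Pun n c (pfx q k)"
      using qq[of k] da neq fdq unfolding dev_def deviate_def sigma_def by simp
    then show ?thesis using False by simp
  qed
  then have "play (\<lambda>h. if h \<in> DD n c then dev h else Pun n c h) = q"
    using play_eq_iff[of "\<lambda>h. if h \<in> DD n c then dev h else Pun n c h" q] by simp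
  then have nW: "q \<notin> WW n c" using Pun_prop[of n c dev] by simp
  have qc: "q \<in> cyl (pfx path n @ [c])" using qSn unfolding cyl_def by simp
  have "v q \<notin> UU n" using nW qc unfolding WW_def by simp
  then have "\<not> pref a (v path) (v q)" unfolding UU_def using an by simp
  then show False using pr' by simp
qed

end

theorem theorem27:
  fixes d :: "'c list \<Rightarrow> 'a" and v :: "(nat \<Rightarrow> 'c) \<Rightarrow> 'o"
    and pref :: "'a \<Rightarrow> 'o \<Rightarrow> 'o \<Rightarrow> bool"
    and \<Gamma> :: "(nat \<Rightarrow> 'c) set set"
  assumes swo: "\<forall>a. strict_weak_order (pref a)"
    and det: "\<forall>W \<in> \<Gamma>. \<forall>D. determined D W"
    and term_int: "\<forall>a I \<gamma>. terminal_interval (pref a) I \<longrightarrow> v -` I \<inter> cyl \<gamma> \<in> \<Gamma>"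
    and limit: "\<forall>a p \<phi>. strict_mono (\<phi> :: nat \<Rightarrow> nat) \<longrightarrow>
        (\<forall>n. d (pfx p (\<phi> n)) = a \<and>
             G_set d v pref a (pfx p (\<phi> (Suc n))) \<subset> G_set d v pref a (pfx p (\<phi> n))) \<longrightarrow>
        v p \<in> (\<Inter>n. G_set d v pref a (pfx p (\<phi> n)))"
    and opt: "\<forall>a \<gamma>. \<exists>s. g_set d v pref a \<gamma> s = G_set d v pref a \<gamma>"
  shows "\<exists>\<sigma>. nash_eq d v pref \<sigma>"
proof -
  interpret game d v pref \<Gamma>
    using swo det term_int limit opt by (rule game.intro)
  show ?thesis using nash by blast
qed

end
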